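(* For every integer $t$, there exists a connected bipartite graph whose adjacency matrix has exactly five distinct eigenvalues and which has at least $t$ distinct valencies (vertex degrees).
   Context: Eigenvalues of a graph are the eigenvalues of its adjacency matrix. Graphs are finite, simple and undirected. *)

theory Defs
  imports "Jordan_Normal_Form.Char_Poly"
begin

definition simple_graph :: "nat \<Rightarrow> (nat \<Rightarrow> nat \<Rightarrow> bool) \<Rightarrow> bool" where
  "simple_graph n E \<longleftrightarrow>
     (\<forall>i j. E i j \<longrightarrow> i < n \<and> j < n) \<and>
     (\<forall>i j. E i j \<longrightarrow> E j i) \<and>
     (\<forall>i. \<not> E i i)"

definition adjacency_matrix :: "nat \<Rightarrow> (nat \<Rightarrow> nat \<Rightarrow> bool) \<Rightarrow> real mat" where
  "adjacency_matrix n E = mat n n (\<lambda>(i, j). if E i j then 1 else 0)"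

definition graph_eigenvalues :: "nat \<Rightarrow> (nat \<Rightarrow> nat \<Rightarrow> bool) \<Rightarrow> real set" where
  "graph_eigenvalues n E = {k. eigenvalue (adjacency_matrix n E) k}"

definition graph_connected :: "nat \<Rightarrow> (nat \<Rightarrow> nat \<Rightarrow> bool) \<Rightarrow> bool" where
  "graph_connected n E \<longleftrightarrow> 0 < n \<and> (\<forall>u<n. \<forall>v<n. E\<^sup>*\<^sup>* u v)"

definition graph_bipartite :: "nat \<Rightarrow> (nat \<Rightarrow> nat \<Rightarrow> bool) \<Rightarrow> bool" where
  "graph_bipartite n E \<longleftrightarrow>
     (\<exists>X. X \<subseteq> {0..<n} \<and> (\<forall>i j. E i j \<longrightarrow> (i \<in> X \<longleftrightarrow> j \<notin> X)))"

definition degree :: "nat \<Rightarrow> (nat \<Rightarrow> nat \<Rightarrow> bool) \<Rightarrow> nat \<Rightarrow> nat" where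
  "degree n E v = card {u. u < n \<and> E v u}"

definition valencies :: "nat \<Rightarrow> (nat \<Rightarrow> nat \<Rightarrow> bool) \<Rightarrow> nat set" where
  "valencies n E = degree n E ` {0..<n}"

end

theory Submission
  imports Defs
begin


lemma split_sum: "(\<Sum>j\<in>{0..<m+L}. f j) = (\<Sum>j<m. f j) + (\<Sum>p<L. f (m+p::nat)) " for f :: "nat \<Rightarrow> real"
proof -
  have "(\<Sum>j\<in>{0..<m+L}. f j) = (\<Sum>j\<in>{0..<m}. f j) + (\<Sum>j\<in>{m..<m+L}. f j)"
    by (simp add: sum.atLeastLessThan_concat)
  also have "(\<Sum>j\<in>{m..<m+L}. f j) = (\<Sum>p<L. f (m+p))"
    using sum.shift_bounds_nat_ivl[of f 0 m L] by (simp add: atLeast0LessThan add.commute)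
  finally show ?thesis by (simp add: atLeast0LessThan)
qed

lemma card_supsets: assumes "finite A" "B \<subseteq> A"
  shows "card {S. S \<subseteq> A \<and> B \<subseteq> S} = 2 ^ (card A - card B)"
proof -
  have "bij_betw (\<lambda>S. S - B) {S. S \<subseteq> A \<and> B \<subseteq> S} (Pow (A - B))"
    by (rule bij_betw_byWitness[where f'="\<lambda>T. T \<union> B"]) (use assms in auto)
  hence "card {S. S \<subseteq> A \<and> B \<subseteq> S} = card (Pow (A - B))" by (rule bij_betw_same_card)
  also have "\<dots> = 2 ^ (card A - card B)"
    using assms by (simp add: card_Pow card_Diff_subset finite_subset)
  finally show ?thesis .
qed




locale pg =
  fixes m :: nat and g :: "nat \<Rightarrow> nat set" and L :: nat
  assumes m2: "m \<ge> 2"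
    and bij: "bij_betw g {..<L} (Pow {..<m} - {{}})"
begin

definition Y where "Y = Pow {..<m} - {{}}"
definition n where "n = m + L"
definition E where "E i j \<longleftrightarrow> (i < m \<and> m \<le> j \<and> j < m + L \<and> i \<in> g (j - m)) \<or>
     (j < m \<and> m \<le> i \<and> i < m + L \<and> j \<in> g (i - m))"
definition c :: real where "c = 2 ^ (m - 2)"

lemma g_Y: "p < L \<Longrightarrow> g p \<subseteq> {..<m} \<and> g p \<noteq> {}"
proof -
  assume "p < L"
  moreover have "g ` {..<L} = Pow {..<m} - {{}}" using bij_betw_imp_surj_on[OF bij] .
  ultimately have "g p \<in> Pow {..<m} - {{}}" by blast
  then show ?thesis by blast
qed

lemma g_surj: "S \<subseteq> {..<m} \<Longrightarrow> S \<noteq> {} \<Longrightarrow> \<exists>p<L. g p = S"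
  proof -
  assume "S \<subseteq> {..<m}" "S \<noteq> {}"
  moreover have "g ` {..<L} = Pow {..<m} - {{}}" using bij_betw_imp_surj_on[OF bij] .
  ultimately have "S \<in> g ` {..<L}" by blast
  then show ?thesis by auto
qed

lemma card_pairs: assumes "i < m" "j < m"
  shows "card {p. p < L \<and> i \<in> g p \<and> j \<in> g p} = (if i = j then 2^(m-1) else 2^(m-2))"
proof -
  have inj: "inj_on g {..<L}" using bij_betw_imp_inj_on[OF bij] .
  have eq: "g ` {p. p < L \<and> i \<in> g p \<and> j \<in> g p} = {S. S \<subseteq> {..<m} \<and> {i,j} \<subseteq> S}"
  proof
    show "g ` {p. p < L \<and> i \<in> g p \<and> j \<in> g p} \<subseteq> {S. S \<subseteq> {..<m} \<and> {i,j} \<subseteq> S}"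
    proof (rule image_subsetI)
      fix p assume "p \<in> {p. p < L \<and> i \<in> g p \<and> j \<in> g p}"
      then show "g p \<in> {S. S \<subseteq> {..<m} \<and> {i,j} \<subseteq> S}" using g_Y[of p] by simp
    qed
    show "{S. S \<subseteq> {..<m} \<and> {i,j} \<subseteq> S} \<subseteq> g ` {p. p < L \<and> i \<in> g p \<and> j \<in> g p}"
    proof
      fix S assume "S \<in> {S. S \<subseteq> {..<m} \<and> {i,j} \<subseteq> S}"
      then have S1: "S \<subseteq> {..<m}" and S2: "i \<in> S" and S3: "j \<in> S" by simp_all
      then have "S \<noteq> {}" by blast
      then obtain p where "p < L" "g p = S" using g_surj[OF S1] by blast
      moreover have "i \<in> g p" "j \<in> g p" using S2 S3 \<open>g p = S\<close> by simp_all
      ultimately show "S \<in> g ` {p. p < L \<and> i \<in> g p \<and> j \<in> g p}"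
        by (intro image_eqI[of S g p]) auto
    qed
  qed
  have inj2: "inj_on g {p. p < L \<and> i \<in> g p \<and> j \<in> g p}"
    using inj by (rule inj_on_subset) (simp add: subset_iff)
  have "card {p. p < L \<and> i \<in> g p \<and> j \<in> g p} = card {S. S \<subseteq> {..<m} \<and> {i,j} \<subseteq> S}"
    using card_image[OF inj2] unfolding eq by simp
  also have "\<dots> = 2 ^ (m - card {i,j})"
    using card_supsets[of "{..<m}" "{i,j}"] assms by (simp add: subset_iff)
  finally show ?thesis by (cases "i = j") simp_all
qed

lemma NNT: assumes "i < m"
  shows "(\<Sum>p<L. if i \<in> g p then (\<Sum>j<m. if j \<in> g p then x j else 0) else 0)
     = c * x i + c * (\<Sum>j<m. x j)"
proof -
  have "(\<Sum>p<L. if i \<in> g p then (\<Sum>j<m. if j \<in> g p then x j else 0) else 0)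
      = (\<Sum>p<L. \<Sum>j<m. if i \<in> g p \<and> j \<in> g p then x j else (0::real))"
    by (rule sum.cong) auto
  also have "\<dots> = (\<Sum>j<m. \<Sum>p<L. if i \<in> g p \<and> j \<in> g p then x j else 0)"
    by (rule sum.swap)
  also have "\<dots> = (\<Sum>j<m. x j * card {p. p < L \<and> i \<in> g p \<and> j \<in> g p})"
  proof (rule sum.cong)
    fix j assume "j \<in> {..<m}"
    have "(\<Sum>p<L. if i \<in> g p \<and> j \<in> g p then x j else 0) = (\<Sum>p\<in>{p. p < L \<and> i \<in> g p \<and> j \<in> g p}. x j)"
      by (simp add: sum.inter_filter[symmetric] lessThan_def Collect_conj_eq[symmetric] conj_commute)
    then show "(\<Sum>p<L. if i \<in> g p \<and> j \<in> g p then x j else 0) = x j * card {p. p < L \<and> i \<in> g p \<and> j \<in> g p}"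
      by simp
  qed simp
  also have "\<dots> = (\<Sum>j<m. c * x j + (if j = i then c * x i else 0))"
  proof (rule sum.cong)
    fix j assume j: "j \<in> {..<m}"
    obtain k where k: "m = k + 2" using m2 by (metis add.commute le_Suc_ex)
    have "(2::real)^(m-1) = 2 * 2^(m-2)" unfolding k by simp
    then show "x j * card {p. p < L \<and> i \<in> g p \<and> j \<in> g p} = c * x j + (if j = i then c * x i else 0)"
      using card_pairs[OF assms, of j] j by (cases "j = i") (simp_all add: c_def)
  qed simp
  also have "\<dots> = c * x i + c * (\<Sum>j<m. x j)"
    using assms by (simp add: sum.distrib sum_distrib_left)
  finally show ?thesis .
qed

end



context pg begin

definition A where "A = adjacency_matrix n E"

lemma dimA: "dim_row A = n" "dim_col A = n"
  unfolding A_def adjacency_matrix_def by simp_all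

lemma multA: assumes "dim_vec v = n" "i < n"
  shows "(A *\<^sub>v v) $ i = (\<Sum>j\<in>{0..<n}. if E i j then v $ j else 0)"
proof -
  have "(A *\<^sub>v v) $ i = row A i \<bullet> v" using assms dimA by simp
  also have "\<dots> = (\<Sum>j\<in>{0..<n}. row A i $ j * v $ j)" unfolding scalar_prod_def using assms by simp
  also have "\<dots> = (\<Sum>j\<in>{0..<n}. if E i j then v $ j else 0)"
  proof (rule sum.cong)
    fix j assume "j \<in> {0..<n}"
    then have "row A i $ j = (if E i j then 1 else 0)"
      using assms dimA by (simp add: A_def adjacency_matrix_def)
    then show "row A i $ j * v $ j = (if E i j then v $ j else 0)" by simp
  qed simp
  finally show ?thesis .
qed

lemma multX: assumes "dim_vec v = n" "i < m"
  shows "(A *\<^sub>v v) $ i = (\<Sum>p<L. if i \<in> g p then v $ (m+p) else 0)"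
proof -
  have "(A *\<^sub>v v) $ i = (\<Sum>j\<in>{0..<m+L}. if E i j then v $ j else 0)"
    using multA[OF assms(1)] assms(2) unfolding n_def by simp
  also have "\<dots> = (\<Sum>j<m. if E i j then v $ j else 0) + (\<Sum>p<L. if E i (m+p) then v $ (m+p) else 0)"
    by (rule split_sum)
  also have "(\<Sum>j<m. if E i j then v $ j else 0) = 0"
    by (rule sum.neutral) (use assms(2) in \<open>simp add: E_def\<close>)
  also have "(\<Sum>p<L. if E i (m+p) then v $ (m+p) else 0) = (\<Sum>p<L. if i \<in> g p then v $ (m+p) else 0)"
    by (rule sum.cong) (use assms(2) in \<open>simp_all add: E_def\<close>)
  finally show ?thesis by simp
qed

lemma multY: assumes "dim_vec v = n" "p < L"
  shows "(A *\<^sub>v v) $ (m+p) = (\<Sum>j<m. if j \<in> g p then v $ j else 0)"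
proof -
  have "(A *\<^sub>v v) $ (m+p) = (\<Sum>j\<in>{0..<m+L}. if E (m+p) j then v $ j else 0)"
    using multA[OF assms(1)] assms(2) unfolding n_def by simp
  also have "\<dots> = (\<Sum>j<m. if E (m+p) j then v $ j else 0) + (\<Sum>q<L. if E (m+p) (m+q) then v $ (m+q) else 0)"
    by (rule split_sum)
  also have "(\<Sum>q<L. if E (m+p) (m+q) then v $ (m+q) else 0) = 0"
    by (rule sum.neutral) (simp add: E_def)
  also have "(\<Sum>j<m. if E (m+p) j then v $ j else 0) = (\<Sum>j<m. if j \<in> g p then v $ j else 0)"
    by (rule sum.cong) (use assms(2) in \<open>simp_all add: E_def\<close>)
  finally show ?thesis by simp
qed

lemma c_pos: "c > 0" unfolding c_def by simp

lemma ev_cases: assumes "eigenvalue A k"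
  shows "k = 0 \<or> k^2 = c \<or> k^2 = c * (m+1)"
proof (cases "k = 0")
  case True then show ?thesis by simp
next
  case k: False
  obtain v where v: "v \<in> carrier_vec n" "v \<noteq> 0\<^sub>v n" "A *\<^sub>v v = k \<cdot>\<^sub>v v"
    using assms unfolding eigenvalue_def eigenvector_def dimA by blast
  have dv: "dim_vec v = n" using v(1) by simp
  define x where "x i = v $ i" for i
  define T where "T p = (\<Sum>j<m. if j \<in> g p then x j else 0)" for p
  have eqX: "k * x i = (\<Sum>p<L. if i \<in> g p then v $ (m+p) else 0)" if "i < m" for i
  proof -
    have "(A *\<^sub>v v) $ i = k * v $ i" using v(3) dv that unfolding n_def
      by (metis index_smult_vec(1) trans_less_add1)
    then show ?thesis using multX[OF dv that] unfolding x_def by simp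
  qed
  have eqY: "v $ (m+p) = T p / k" if "p < L" for p
  proof -
    have "(A *\<^sub>v v) $ (m+p) = k * v $ (m+p)" using v(3) dv that unfolding n_def
      by (metis index_smult_vec(1) add_less_cancel_left)
    then have "k * v $ (m+p) = T p" using multY[OF dv that] unfolding T_def x_def by simp
    then show ?thesis using k by (simp add: field_simps)
  qed
  define S where "S = (\<Sum>j<m. x j)"
  have key: "k^2 * x i = c * x i + c * S" if "i < m" for i
  proof -
    have "(\<Sum>p<L. if i \<in> g p then v $ (m+p) else 0) = (\<Sum>p<L. (if i \<in> g p then T p else 0) / k)"
      by (rule sum.cong) (simp_all add: eqY)
    also have "\<dots> = (\<Sum>p<L. if i \<in> g p then T p else 0) / k"
      by (simp add: sum_divide_distrib)
    also have "(\<Sum>p<L. if i \<in> g p then T p else 0) = c * x i + c * S"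
      unfolding T_def S_def by (rule NNT[OF that])
    finally have "k * x i = (c * x i + c * S) / k" using eqX[OF that] by simp
    then show ?thesis using k by (simp add: field_simps power2_eq_square)
  qed
  have xnz: "\<exists>i<m. x i \<noteq> 0"
  proof (rule ccontr)
    assume "\<not> (\<exists>i<m. x i \<noteq> 0)"
    then have x0: "\<And>i. i < m \<Longrightarrow> x i = 0" by blast
    have "v = 0\<^sub>v n"
    proof (rule eq_vecI)
      fix i assume "i < dim_vec (0\<^sub>v n)"
      then have i: "i < m + L" unfolding n_def by simp
      show "v $ i = 0\<^sub>v n $ i"
      proof (cases "i < m")
        case True then show ?thesis using x0[OF True] i unfolding x_def n_def by simp
      next
        case False
        then obtain p where p: "i = m + p" "p < L" using i by (metis add_less_cancel_left le_Suc_ex not_less)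
        have "T p = 0" unfolding T_def by (rule sum.neutral) (simp add: x0)
        then show ?thesis using eqY[OF p(2)] p i unfolding n_def by simp
      qed
    qed (simp add: dv)
    with v(2) show False by simp
  qed
  then obtain i0 where i0: "i0 < m" "x i0 \<noteq> 0" by blast
  show ?thesis
  proof (cases "S = 0")
    case True
    then have "k^2 * x i0 = c * x i0" using key[OF i0(1)] by simp
    then show ?thesis using i0(2) by simp
  next
    case False
    have "(\<Sum>i<m. k^2 * x i) = (\<Sum>i<m. c * x i + c * S)"
      by (rule sum.cong) (simp_all add: key)
    then have "k^2 * S = c * S + m * (c * S)"
      unfolding S_def by (simp add: sum_distrib_left sum.distrib)
    then have "k^2 * S = (c * (m+1)) * S" by (simp add: algebra_simps)
    then show ?thesis using False by simp
  qed
qed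


lemma ev_from: assumes k: "k \<noteq> 0" and i0: "i0 < m" "x i0 \<noteq> 0"
    and key: "\<And>i. i < m \<Longrightarrow> c * x i + c * (\<Sum>j<m. x j) = k^2 * x i"
  shows "eigenvalue A k"
proof -
  define T where "T p = (\<Sum>j<m. if j \<in> g p then x j else 0)" for p
  define v where "v = vec n (\<lambda>i. if i < m then x i else T (i - m) / k)"
  have dv: "dim_vec v = n" unfolding v_def by simp
  have "A *\<^sub>v v = k \<cdot>\<^sub>v v"
  proof (rule eq_vecI)
    fix i assume "i < dim_vec (k \<cdot>\<^sub>v v)"
    then have i: "i < m + L" using dv unfolding n_def by simp
    show "(A *\<^sub>v v) $ i = (k \<cdot>\<^sub>v v) $ i"
    proof (cases "i < m")
      case True
      have "(A *\<^sub>v v) $ i = (\<Sum>p<L. if i \<in> g p then v $ (m+p) else 0)" by (rule multX[OF dv True])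
      also have "\<dots> = (\<Sum>p<L. (if i \<in> g p then T p else 0) / k)"
        by (rule sum.cong) (simp_all add: v_def n_def)
      also have "\<dots> = (\<Sum>p<L. if i \<in> g p then T p else 0) / k"
        by (simp add: sum_divide_distrib)
      also have "(\<Sum>p<L. if i \<in> g p then T p else 0) = c * x i + c * (\<Sum>j<m. x j)"
        unfolding T_def by (rule NNT[OF True])
      also have "\<dots> = k^2 * x i" by (rule key[OF True])
      finally have "(A *\<^sub>v v) $ i = k * x i" using k by (simp add: power2_eq_square)
      then show ?thesis using True i dv unfolding v_def n_def by simp
    next
      case False
      then obtain p where p: "i = m + p" "p < L" using i by (metis add_less_cancel_left le_Suc_ex not_less)
      have "(A *\<^sub>v v) $ i = (\<Sum>j<m. if j \<in> g p then v $ j else 0)" unfolding p(1) by (rule multY[OF dv p(2)])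
      also have "\<dots> = T p" unfolding T_def by (rule sum.cong) (simp_all add: v_def n_def)
      finally show ?thesis using k p i dv unfolding v_def n_def by simp
    qed
  qed (simp add: dv dimA)
  moreover have "v \<noteq> 0\<^sub>v n"
  proof
    assume "v = 0\<^sub>v n"
    then have "v $ i0 = 0" using i0 unfolding n_def by simp
    then show False using i0 unfolding v_def n_def by simp
  qed
  ultimately show ?thesis unfolding eigenvalue_def eigenvector_def dimA
    using dv by (auto intro: carrier_vecI)
qed

lemma ev0: "eigenvalue A 0"
proof -
  have m0: "0 < m" "1 < m" using m2 by auto
  obtain p1 where p1: "p1 < L" "g p1 = {0}" using g_surj[of "{0}"] m0 by auto
  obtain p2 where p2: "p2 < L" "g p2 = {1}" using g_surj[of "{1}"] m0 by auto
  obtain p3 where p3: "p3 < L" "g p3 = {0,1}" using g_surj[of "{0,1}"] m0 by auto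
  have d: "p1 \<noteq> p2" "p1 \<noteq> p3" "p2 \<noteq> p3" using p1 p2 p3 by auto
  define w :: "nat \<Rightarrow> real" where "w p = (if p = p1 then 1 else if p = p2 then 1 else if p = p3 then -1 else 0)" for p
  define v where "v = vec n (\<lambda>i. if i < m then 0 else w (i - m))"
  have dv: "dim_vec v = n" unfolding v_def by simp
  have "A *\<^sub>v v = 0 \<cdot>\<^sub>v v"
  proof (rule eq_vecI)
    fix i assume "i < dim_vec (0 \<cdot>\<^sub>v v)"
    then have i: "i < m + L" using dv unfolding n_def by simp
    show "(A *\<^sub>v v) $ i = (0 \<cdot>\<^sub>v v) $ i"
    proof (cases "i < m")
      case True
      have "(A *\<^sub>v v) $ i = (\<Sum>p<L. if i \<in> g p then v $ (m+p) else 0)" by (rule multX[OF dv True])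
      also have "\<dots> = (\<Sum>p<L. if i \<in> g p then w p else 0)"
        by (rule sum.cong) (simp_all add: v_def n_def)
      also have "\<dots> = (\<Sum>p\<in>{p1,p2,p3}. if i \<in> g p then w p else 0)"
        by (rule sum.mono_neutral_right) (use p1 p2 p3 in \<open>auto simp: w_def\<close>)
      also have "\<dots> = 0" using d p1 p2 p3 by (simp add: w_def)
      finally show ?thesis using i dv unfolding n_def by simp
    next
      case False
      then obtain p where p: "i = m + p" "p < L" using i by (metis add_less_cancel_left le_Suc_ex not_less)
      have "(A *\<^sub>v v) $ i = (\<Sum>j<m. if j \<in> g p then v $ j else 0)" unfolding p(1) by (rule multY[OF dv p(2)])
      also have "\<dots> = 0" by (rule sum.neutral) (simp add: v_def n_def)
      finally show ?thesis using i dv unfolding n_def by simp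
    qed
  qed (simp add: dv dimA)
  moreover have "v \<noteq> 0\<^sub>v n"
  proof
    assume "v = 0\<^sub>v n"
    then have "v $ (m + p1) = 0" using p1 unfolding n_def by simp
    then show False using p1 unfolding v_def n_def w_def by simp
  qed
  ultimately show ?thesis unfolding eigenvalue_def eigenvector_def dimA
    using dv by (auto intro: carrier_vecI)
qed

end



lemma sq_cases: "(k::real)^2 = a \<Longrightarrow> k = sqrt a \<or> k = - sqrt a"
proof -
  assume "k^2 = a"
  then have "sqrt a = \<bar>k\<bar>" by (metis real_sqrt_abs)
  then show ?thesis by (cases "k \<ge> 0") auto
qed

lemma card5: "0 < (a::real) \<Longrightarrow> a < b \<Longrightarrow> card {0, a, -a, b, -b} = 5"
  by simp

context pg begin

lemma ev_sqrt_c: assumes "k^2 = c" shows "eigenvalue A k"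
proof -
  have m0: "0 < m" "1 < m" using m2 by auto
  have k: "k \<noteq> 0" using assms c_pos by auto
  define x :: "nat \<Rightarrow> real" where "x i = (if i = 0 then 1 else 0) - (if i = 1 then 1 else 0)" for i
  have S: "(\<Sum>j<m. x j) = 0" unfolding x_def using m0 by (simp add: sum_subtractf)
  show ?thesis
  proof (rule ev_from[OF k m0(1)])
    show "x 0 \<noteq> 0" unfolding x_def by simp
    fix i assume "i < m"
    show "c * x i + c * (\<Sum>j<m. x j) = k^2 * x i" using S assms by simp
  qed
qed

lemma ev_sqrt_b: assumes "k^2 = c * (m+1)" shows "eigenvalue A k"
proof -
  have m0: "0 < m" using m2 by auto
  have k: "k \<noteq> 0" using assms c_pos by auto
  define x :: "nat \<Rightarrow> real" where "x i = 1" for i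
  show ?thesis
  proof (rule ev_from[OF k m0(1)])
    show "x 0 \<noteq> 0" unfolding x_def by simp
    fix i assume "i < m"
    show "c * x i + c * (\<Sum>j<m. x j) = k^2 * x i" using assms unfolding x_def by (simp add: algebra_simps)
  qed
qed

lemma eigset: "{k. eigenvalue A k} = {0, sqrt c, - sqrt c, sqrt (c * (m+1)), - sqrt (c * (m+1))}"
proof
  show "{k. eigenvalue A k} \<subseteq> {0, sqrt c, - sqrt c, sqrt (c * (m+1)), - sqrt (c * (m+1))}"
  proof
    fix k assume "k \<in> {k. eigenvalue A k}"
    then have "k = 0 \<or> k^2 = c \<or> k^2 = c * (m+1)" using ev_cases by simp
    then show "k \<in> {0, sqrt c, - sqrt c, sqrt (c * (m+1)), - sqrt (c * (m+1))}"
      using sq_cases[of k c] sq_cases[of k "c * (m+1)"] by auto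
  qed
  have c0: "c \<ge> 0" using c_pos by simp
  have "c * (m+1) \<ge> 0" using c_pos by simp
  then show "{0, sqrt c, - sqrt c, sqrt (c * (m+1)), - sqrt (c * (m+1))} \<subseteq> {k. eigenvalue A k}"
    using ev0 ev_sqrt_c[of "sqrt c"] ev_sqrt_c[of "- sqrt c"] ev_sqrt_b[of "sqrt (c * (m+1))"]
      ev_sqrt_b[of "- sqrt (c * (m+1))"] c0 by auto
qed

lemma card_eig: "card {k. eigenvalue A k} = 5"
proof -
  have a: "sqrt c > 0" using c_pos by simp
  have "c < c * (m+1)" using c_pos m2 by simp
  then have b0: "sqrt c < sqrt (c * (m+1))" by simp
  define b where "b = sqrt (c * (m+1))"
  have b: "sqrt c < b" using b0 unfolding b_def .
  have "card {0, sqrt c, - sqrt c, b, - b} = 5" using card5[OF a b] .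
  then show ?thesis unfolding eigset b_def .
qed

lemma simple: "simple_graph n E"
  unfolding simple_graph_def E_def n_def by auto

lemma bipartite: "graph_bipartite n E"
  unfolding graph_bipartite_def
  by (rule exI[of _ "{0..<m}"]) (auto simp: E_def n_def)

lemma valencies_ge: "card (valencies n E) \<ge> m"
proof -
  have deg: "degree n E (m+p) = card (g p)" if "p < L" for p
  proof -
    have "{u. u < n \<and> E (m+p) u} = g p" using g_Y[OF that] that unfolding n_def E_def by auto
    then show ?thesis unfolding degree_def by simp
  qed
  have "{1..m} \<subseteq> valencies n E"
  proof
    fix k assume k: "k \<in> {1..m}"
    have "0 \<in> {..<k}" using k by simp
    then have k1: "{..<k} \<noteq> {}" "{..<k} \<subseteq> {..<m}" using k by auto
    obtain p where p: "p < L" "g p = {..<k}" using g_surj[OF k1(2) k1(1)] by blast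
    have "degree n E (m+p) = k" using deg[OF p(1)] p(2) by simp
    moreover have "m + p \<in> {0..<n}" using p unfolding n_def by simp
    ultimately show "k \<in> valencies n E" unfolding valencies_def by (intro image_eqI[where x="m+p"]) simp_all
  qed
  moreover have "finite (valencies n E)" unfolding valencies_def by simp
  ultimately have "card {1..m} \<le> card (valencies n E)" by (rule card_mono[rotated])
  then show ?thesis by simp
qed

lemma connected: "graph_connected n E"
proof -
  have m0: "0 < m" using m2 by auto
  have "{..<m} \<subseteq> {..<m}" "{..<m} \<noteq> {}" using m0 by auto
  then obtain pf where pf: "pf < L" "g pf = {..<m}" using g_surj by blast
  have symE: "E a b \<Longrightarrow> E b a" for a b unfolding E_def by auto
  have eX: "E i (m+pf)" if "i < m" for i using that pf unfolding E_def by simp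
  have toX: "E\<^sup>*\<^sup>* i j" if "i < m" "j < m" for i j
    using converse_rtranclp_into_rtranclp[of E, OF eX[OF that(1)] r_into_rtranclp[of E, OF symE[OF eX[OF that(2)]]]] .
  have r: "E\<^sup>*\<^sup>* u 0 \<and> E\<^sup>*\<^sup>* 0 u" if "u < n" for u
  proof (cases "u < m")
    case True
    show ?thesis using toX[OF True m0] toX[OF m0 True] by (rule conjI)
  next
    case False
    define p where "p = u - m"
    have p: "u = m + p" "p < L" using False that unfolding n_def p_def by auto
    obtain i where i: "i \<in> g p" using g_Y[OF p(2)] by blast
    have im: "i < m" using g_Y[OF p(2)] i by auto
    have e1: "E u i" using p i im unfolding E_def by simp
    have "E\<^sup>*\<^sup>* u 0" using converse_rtranclp_into_rtranclp[of E, OF e1 toX[OF im m0]] .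
    moreover have "E\<^sup>*\<^sup>* 0 u" using rtranclp.rtrancl_into_rtrancl[of E, OF toX[OF m0 im] symE[OF e1]] .
    ultimately show ?thesis by (rule conjI)
  qed
  have "0 < n" unfolding n_def using m0 by simp
  moreover have "\<forall>u<n. \<forall>v<n. E\<^sup>*\<^sup>* u v"
  proof (intro allI impI)
    fix u v assume uv: "u < n" "v < n"
    have "E\<^sup>*\<^sup>* u 0" using r[OF uv(1)] by (rule conjunct1)
    moreover have "E\<^sup>*\<^sup>* 0 v" using r[OF uv(2)] by (rule conjunct2)
    ultimately show "E\<^sup>*\<^sup>* u v" by (rule rtranclp_trans)
  qed
  ultimately show ?thesis unfolding graph_connected_def by (rule conjI)
qed

end

theorem theorem1:
  fixes t :: int
  shows "\<exists>n E. simple_graph n E \<and> graph_connected n E \<and> graph_bipartite n E \<and>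
           card (graph_eigenvalues n E) = 5 \<and> int (card (valencies n E)) \<ge> t"
proof -
  define m where "m = max 2 (nat t)"
  define Y where "Y = Pow {..<m} - {{}}"
  have "finite Y" unfolding Y_def by simp
  then obtain g where g: "bij_betw g {0..<card Y} Y" using ex_bij_betw_nat_finite by blast
  interpret P: pg m g "card Y"
  proof
    show "2 \<le> m" unfolding m_def by simp
    show "bij_betw g {..<card Y} (Pow {..<m} - {{}})" using g unfolding atLeast0LessThan Y_def .
  qed
  have h: "max 2 (nat t) \<le> card (valencies P.n P.E)"
    using P.valencies_ge unfolding m_def .
  then have "nat t \<le> card (valencies P.n P.E)" by simp
  then have "int (nat t) \<le> int (card (valencies P.n P.E))" by (simp only: of_nat_le_iff)
  moreover have "t \<le> int (nat t)" by simp
  ultimately have "int (card (valencies P.n P.E)) \<ge> t" by linarith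
  moreover have "card (graph_eigenvalues P.n P.E) = 5"
    using P.card_eig unfolding graph_eigenvalues_def P.A_def .
  ultimately show ?thesis using P.simple P.connected P.bipartite
    by (intro exI[of _ P.n] exI[of _ P.E] conjI)
qed


end
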